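(* Let $p$ be a prime, $t\ge r(p)=:r$, and let $f_2,f_3\in\{0,1\}$ satisfy $w_2(p^t)\le f_2$ and $w_3(p^t)\le f_3$. Let $c,d\in\mathbb{Z}$. (i) If $p^{t-r+2}\nmid c$ and $p^{t-r+2}\nmid d$, then $E_{f_2,f_3}(c,d;p^t)\ne0$ implies $(c,p^t)=p^s=(d,p^t)$ for some $s$, and in this case $E_{f_2,f_3}(c,d;p^t)=p^sE_{f_2,f_3}(c/p^s,d/p^s;p^{t-s})$. (ii) If $p^{t-r+2}\mid c$ or $p^{t-r+2}\mid d$, then $E_{f_2,f_3}(c,d;p^t)\ne0$ implies $p^{t-r+1}\mid \gcd(c,d)$, and in this case $E_{f_2,f_3}(c,d;p^t)=p^{t-r+1}E_{f_2,f_3}\big(c/p^{t-r+1},d/p^{t-r+1};p^{r-1}\big)$.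
   Context: For $c,d\in\mathbb{Z}$, $q\in\mathbb{N}$: $E(c,d;q)=\sum^*_{z\bmod q}e\big(\frac{cz^3-dz^2}{q}\big)$ (sum over $z$ coprime to $q$, $e(x)=\exp(2\pi ix)$), and $E_{f_2,f_3}(c,d;q)=E(2^{f_2}c,3^{f_3}d;q)$. Also $w_2(q)=1$ if $4\mid q$ and $0$ otherwise; $w_3(q)=1$ if $9\mid q$ and $0$ otherwise. $r(2)=6$, $r(3)=5$, and $r(p)=2$ for primes $p>3$. *)

theory Defs
  imports "HOL-Analysis.Analysis"
begin

definition expc :: "real \<Rightarrow> complex" where
  "expc x = exp (2 * pi * \<i> * complex_of_real x)"

definition E :: "int \<Rightarrow> int \<Rightarrow> nat \<Rightarrow> complex" where
  "E c d q = (\<Sum>z\<in>{z\<in>{0..<q}. coprime z q}.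
      expc (real_of_int (c * int z ^ 3 - d * int z ^ 2) / real q))"

definition Eff :: "nat \<Rightarrow> nat \<Rightarrow> int \<Rightarrow> int \<Rightarrow> nat \<Rightarrow> complex" where
  "Eff f2 f3 c d q = E (2 ^ f2 * c) (3 ^ f3 * d) q"

definition w2 :: "nat \<Rightarrow> nat" where "w2 q = (if 4 dvd q then 1 else 0)"
definition w3 :: "nat \<Rightarrow> nat" where "w3 q = (if 9 dvd q then 1 else 0)"

definition r :: "nat \<Rightarrow> nat" where
  "r p = (if p = 2 then 6 else if p = 3 then 5 else 2)"

end

theory Submission
  imports Defs
begin


lemma expc_add: "expc (x + y) = expc x * expc y"
  unfolding expc_def by (simp add: distrib_left exp_add[symmetric])

lemma expc_int: "expc (of_int n) = 1"
  unfolding expc_def using exp_integer_2pi[of "of_int n"] by (simp add: mult.commute mult.left_commute)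

lemma expc_cong:
  assumes "k mod int q = k' mod int q" "q > 0"
  shows "expc (of_int k / real q) = expc (of_int k' / real q)"
proof -
  obtain n where n: "k' = k + int q * n"
    using assms(1) by (metis mod_eqE)
  have "of_int k' / real q = of_int k / real q + of_int n"
    using assms(2) by (simp add: n field_simps)
  then show ?thesis by (simp add: expc_add expc_int)
qed

lemma expc_eq_1: "expc x = 1 \<longleftrightarrow> x \<in> \<int>"
  unfolding expc_def exp_eq_1 by (auto simp: Ints_def)

lemma expc_nat_mult: "expc (of_nat y * x) = expc x ^ y"
  unfolding expc_def by (metis exp_of_nat_mult mult.left_commute of_real_mult of_real_of_nat_eq)


lemma geom_zero:
  assumes "N > 0" "\<not> int N dvd L"
  shows "(\<Sum>y<N. expc (real y * (of_int L / real N))) = 0"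
proof -
  let ?w = "expc (of_int L / real N)"
  have w1: "?w \<noteq> 1"
  proof
    assume "?w = 1"
    then obtain n where n: "of_int L / real N = of_int n" by (auto simp: expc_eq_1 Ints_def)
    then have "L = int N * n" using assms(1)
      by (metis (mono_tags, opaque_lifting) divide_eq_eq mult.commute of_int_eq_iff of_int_mult of_int_of_nat_eq of_nat_0_less_iff order_less_irrefl)
    then show False using assms(2) by simp
  qed
  have wN: "?w ^ N = 1"
  proof -
    have "?w ^ N = expc (real N * (of_int L / real N))" by (simp only: expc_nat_mult)
    also have "real N * (of_int L / real N) = of_int L" using assms(1) by simp
    finally show ?thesis by (simp add: expc_int)
  qed
  have "(\<Sum>y<N. expc (real y * (of_int L / real N))) = (\<Sum>y<N. ?w ^ y)"
    by (simp only: expc_nat_mult)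
  also have "\<dots> = 0" using w1 wN by (simp add: sum_gp_strict)
  finally show ?thesis .
qed


definition U :: "nat \<Rightarrow> nat set" where "U q = {z\<in>{0..<q}. coprime z q}"

lemma E_U: "E c d q = (\<Sum>z\<in>U q. expc (real_of_int (c * int z ^ 3 - d * int z ^ 2) / real q))"
  unfolding E_def U_def ..

lemma finite_U[simp]: "finite (U q)" unfolding U_def by auto

lemma sum_lift:
  fixes p k s :: nat
  assumes "prime p" "k > 0"
  shows "(\<Sum>z\<in>U (p^k * p^s). h (z mod p^k)) = of_nat (p^s) * (\<Sum>w\<in>U (p^k). h w)"
proof -
  let ?n = "p^k" and ?m = "p^s"
  have n0: "?n > 0" "?m > 0" using assms prime_gt_0_nat by auto
  have cop: "coprime z (?n * ?m) \<longleftrightarrow> coprime (z mod ?n) ?n" for z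
  proof -
    have "coprime z (?n * ?m) \<longleftrightarrow> coprime z p" using assms(2) by (simp add: power_add[symmetric])
    also have "\<dots> \<longleftrightarrow> coprime z ?n" using assms(2) by simp
    also have "\<dots> \<longleftrightarrow> coprime (z mod ?n) ?n" using n0(1) coprime_mod_left_iff[of ?n z] by (metis less_not_refl)
    finally show ?thesis .
  qed
  have "(\<Sum>z\<in>U (?n * ?m). h (z mod ?n)) = (\<Sum>x\<in>U ?n \<times> {..<?m}. h (fst x))"
  proof (rule sum.reindex_bij_witness[where i = "\<lambda>x. fst x + ?n * snd x" and j = "\<lambda>z. (z mod ?n, z div ?n)"])
    fix x assume x: "x \<in> U ?n \<times> {..<?m}"
    obtain w j where xe: "x = (w, j)" by (cases x)
    have w: "w < ?n" "coprime w ?n" "j < ?m" using x xe by (auto simp: U_def)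
    show "((fst x + ?n * snd x) mod ?n, (fst x + ?n * snd x) div ?n) = x"
      using w xe n0 by simp
    have "fst x + ?n * snd x < ?n * ?m"
    proof -
      have "w + ?n * j < ?n + ?n * j" using w by simp
      also have "\<dots> = ?n * (j + 1)" by (simp add: algebra_simps)
      also have "\<dots> \<le> ?n * ?m" using w by (intro mult_le_mono2) simp
      finally show ?thesis using xe by simp
    qed
    moreover have "coprime (fst x + ?n * snd x) (?n * ?m)"
    proof -
      have "(w + ?n * j) mod ?n = w" using w by simp
      then show ?thesis using cop[of "w + ?n * j"] w xe by simp
    qed
    ultimately show "fst x + ?n * snd x \<in> U (?n * ?m)" by (simp add: U_def)
  next
    fix z assume z: "z \<in> U (?n * ?m)"
    then have z': "z < ?n * ?m" "coprime z (?n * ?m)" by (auto simp: U_def)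
    show "fst (z mod ?n, z div ?n) + ?n * snd (z mod ?n, z div ?n) = z" by simp
    have "z div ?n < ?m" using z' n0 by (simp add: less_mult_imp_div_less mult.commute)
    moreover have "z mod ?n < ?n" using n0 by simp
    moreover have "coprime (z mod ?n) ?n" using z' cop by blast
    ultimately show "(z mod ?n, z div ?n) \<in> U ?n \<times> {..<?m}" by (simp add: U_def)
    show "h (fst (z mod ?n, z div ?n)) = h (z mod ?n)" by simp
  qed
  also have "\<dots> = (\<Sum>w\<in>U ?n. \<Sum>j<?m. h w)"
    unfolding sum.cartesian_product by (simp add: case_prod_unfold)
  also have "\<dots> = of_nat ?m * (\<Sum>w\<in>U ?n. h w)"
    by (simp add: sum_distrib_left)
  finally show ?thesis .
qed


lemma poly_mod:
  fixes x m A B :: int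
  shows "(A * x ^ 3 - B * x ^ 2) mod m = (A * (x mod m) ^ 3 - B * (x mod m) ^ 2) mod m"
proof -
  have "(A * x ^ 3) mod m = (A * (x mod m) ^ 3) mod m"
    by (metis mod_mult_right_eq power_mod)
  moreover have "(B * x ^ 2) mod m = (B * (x mod m) ^ 2) mod m"
    by (metis mod_mult_right_eq power_mod)
  ultimately show ?thesis by (metis mod_diff_cong)
qed

lemma E_reduce:
  fixes p s t :: nat and A B :: int
  assumes "prime p" "s < t" "int p ^ s dvd A" "int p ^ s dvd B"
  shows "E A B (p ^ t) = of_nat (p ^ s) * E (A div int p ^ s) (B div int p ^ s) (p ^ (t - s))"
proof -
  define k where "k = t - s"
  have k0: "k > 0" using assms(2) by (simp add: k_def)
  have pt: "p ^ t = p ^ k * p ^ s" using assms(2) by (simp add: k_def power_add[symmetric])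
  obtain A' where A: "A = int p ^ s * A'" using assms(3) by blast
  obtain B' where B: "B = int p ^ s * B'" using assms(4) by blast
  have p0: "p > 0" using assms(1) prime_gt_0_nat by blast
  have Ad: "A div int p ^ s = A'" "B div int p ^ s = B'" using A B p0 by simp_all
  let ?h = "\<lambda>w::nat. expc (real_of_int (A' * int w ^ 3 - B' * int w ^ 2) / real (p ^ k))"
  have eq: "expc (real_of_int (A * int z ^ 3 - B * int z ^ 2) / real (p ^ t)) = ?h (z mod p ^ k)" for z
  proof -
    have "real_of_int (A * int z ^ 3 - B * int z ^ 2) / real (p ^ t)
        = real_of_int (A' * int z ^ 3 - B' * int z ^ 2) / real (p ^ k)"
      using p0 unfolding pt A B by (simp add: field_simps)
    also have "expc \<dots> = ?h (z mod p ^ k)"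
    proof (rule expc_cong)
      show "p ^ k > 0" using p0 by simp
      have "int (z mod p ^ k) = int z mod int (p ^ k)" by (simp add: of_nat_mod)
      then show "(A' * int z ^ 3 - B' * int z ^ 2) mod int (p ^ k) =
          (A' * int (z mod p ^ k) ^ 3 - B' * int (z mod p ^ k) ^ 2) mod int (p ^ k)"
        using poly_mod by simp
    qed
    finally show ?thesis .
  qed
  have "E A B (p ^ t) = (\<Sum>z\<in>U (p ^ k * p ^ s). ?h (z mod p ^ k))"
    unfolding E_U pt[symmetric] using eq by simp
  also have "\<dots> = of_nat (p ^ s) * (\<Sum>w\<in>U (p ^ k). ?h w)"
    by (rule sum_lift[OF assms(1) k0])
  also have "\<dots> = of_nat (p ^ s) * E (A div int p ^ s) (B div int p ^ s) (p ^ (t - s))"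
    unfolding E_U Ad k_def ..
  finally show ?thesis .
qed


lemma E_vanish:
  fixes p j T :: nat and A B :: int
  assumes p: "prime p" and j1: "1 \<le> j" and T2: "T \<le> 2 * j" and jT: "j \<le> T"
    and nd: "\<And>z::nat. coprime z p \<Longrightarrow> \<not> int p ^ (T - j) dvd (3 * A * int z - 2 * B)"
  shows "E A B (p ^ T) = 0"
proof -
  define q where "q = p ^ T"
  define M where "M = p ^ j"
  define N where "N = p ^ (T - j)"
  have p0: "p > 0" using p prime_gt_0_nat by blast
  have qMN: "q = M * N" unfolding q_def M_def N_def using jT by (simp add: power_add[symmetric])
  have q0: "q > 0" "N > 0" "M > 0" using p0 by (simp_all add: q_def N_def M_def)
  have qM2: "int q dvd int M ^ 2"
  proof -
    have "p ^ T dvd p ^ (2 * j)" using T2 by (simp add: le_imp_power_dvd)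
    then show ?thesis unfolding q_def M_def by (metis of_nat_dvd_iff of_nat_power power_mult mult.commute)
  qed
  have T0: "T > 0" using j1 jT by simp
  have copq: "coprime z q \<longleftrightarrow> coprime z p" for z using T0 by (simp add: q_def)
  define g where "g z = expc (real_of_int (A * int z ^ 3 - B * int z ^ 2) / real q)" for z :: nat
  define L where "L z = int z ^ 2 * (3 * A * int z - 2 * B)" for z :: nat
  have Eg: "E A B (p ^ T) = (\<Sum>z\<in>U q. g z)" unfolding E_U g_def q_def ..
  have shift: "(\<Sum>z\<in>U q. g z) = (\<Sum>z\<in>U q. g z * expc (real y * (of_int (L z) / real N)))" for y :: nat
  proof -
    define u where "u = 1 + M * y"
    define \<sigma> where "\<sigma> z = (z * u) mod q" for z
    have cu: "coprime u p"
    proof -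
      have "p dvd M" unfolding M_def using j1 by (simp add: dvd_power)
      then obtain m where "M * y = p * m" by (metis dvd_mult2 dvdE)
      then have "u = m * p + 1" by (simp add: u_def)
      then have "gcd p u = 1" using gcd_add_mult[of p m 1] by simp
      then show ?thesis by (simp add: coprime_iff_gcd_eq_1 gcd.commute)
    qed
    have sU: "\<sigma> z \<in> U q" if "z \<in> U q" for z
    proof -
      have "coprime z p" using that copq by (simp add: U_def)
      then have "coprime (z * u) p" using cu by simp
      then have "coprime (z * u) q" using copq by simp
      then have "coprime (\<sigma> z) q" unfolding \<sigma>_def using q0(1)
        by (metis coprime_mod_left_iff less_not_refl)
      then show ?thesis using q0(1) by (simp add: U_def \<sigma>_def)
    qed
    have inj: "inj_on \<sigma> (U q)"
    proof (rule inj_onI)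
      fix a b assume a: "a \<in> U q" and b: "b \<in> U q" and e: "\<sigma> a = \<sigma> b"
      have "int q dvd (int a - int b) * int u"
      proof -
        have "int (a * u) mod int q = int (b * u) mod int q" using e unfolding \<sigma>_def
          by (metis of_nat_mod)
        then have "int q dvd int (a * u) - int (b * u)" by (simp add: mod_eq_dvd_iff)
        then show ?thesis by (simp add: algebra_simps)
      qed
      moreover have "coprime (int q) (int u)"
      proof -
        have "coprime u q" using cu copq by simp
        then show ?thesis by (simp add: coprime_commute)
      qed
      ultimately have "int q dvd int a - int b" using coprime_dvd_mult_left_iff by blast
      moreover have "a < q" "b < q" using a b by (auto simp: U_def)
      ultimately show "a = b"
      proof (cases "int a - int b = 0")
        case False
        have "\<bar>int q\<bar> \<le> \<bar>int a - int b\<bar>" by (rule dvd_imp_le_int[OF False \<open>int q dvd int a - int b\<close>])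
        then show ?thesis using \<open>a < q\<close> \<open>b < q\<close> by linarith
      qed simp
    qed
    have img: "\<sigma> ` U q = U q" using sU inj by (intro endo_inj_surj) auto
    have "(\<Sum>z\<in>U q. g z) = (\<Sum>z\<in>U q. g (\<sigma> z))"
      using sum.reindex[OF inj, of g] img by simp
    also have "\<dots> = (\<Sum>z\<in>U q. g z * expc (real y * (of_int (L z) / real N)))"
    proof (rule sum.cong[OF refl])
      fix z assume "z \<in> U q"
      define K where "K = A * int z ^ 3 - B * int z ^ 2"
      have alg: "A * int (z * u) ^ 3 - B * int (z * u) ^ 2
          = K + int M * int y * L z + int M ^ 2 * (A * int z ^ 3 * (3 * int y ^ 2 + int M * int y ^ 3) - B * int z ^ 2 * int y ^ 2)"
        unfolding K_def L_def u_def by (simp add: algebra_simps power2_eq_square power3_eq_cube)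
      have "g (\<sigma> z) = expc (real_of_int (A * int (z * u) ^ 3 - B * int (z * u) ^ 2) / real q)"
        unfolding g_def \<sigma>_def
        by (rule expc_cong[OF _ q0(1)]) (metis of_nat_mod poly_mod)
      also have "\<dots> = expc (real_of_int (K + int M * int y * L z) / real q)"
      proof (rule expc_cong[OF _ q0(1)])
        obtain R where "int M ^ 2 = int q * R" using qM2 by blast
        then show "(A * int (z * u) ^ 3 - B * int (z * u) ^ 2) mod int q = (K + int M * int y * L z) mod int q"
          unfolding alg by (simp add: mult.assoc)
      qed
      also have "real_of_int (K + int M * int y * L z) / real q = real_of_int K / real q + real y * (of_int (L z) / real N)"
        using q0 unfolding qMN by (simp add: field_simps)
      finally show "g (\<sigma> z) = g z * expc (real y * (of_int (L z) / real N))"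
        by (simp add: expc_add g_def K_def)
    qed
    finally show ?thesis .
  qed
  have "of_nat N * E A B (p ^ T) = (\<Sum>y<N. \<Sum>z\<in>U q. g z * expc (real y * (of_int (L z) / real N)))"
    unfolding Eg using shift by simp
  also have "\<dots> = (\<Sum>z\<in>U q. g z * (\<Sum>y<N. expc (real y * (of_int (L z) / real N))))"
    by (simp add: sum.swap[of _ "{..<N}"] sum_distrib_left)
  also have "\<dots> = 0"
  proof (rule sum.neutral, rule ballI)
    fix z assume z: "z \<in> U q"
    then have cz: "coprime z p" using copq by (simp add: U_def)
    have "\<not> int N dvd L z"
    proof
      assume "int N dvd L z"
      moreover have "coprime (int N) (int z ^ 2)" using cz unfolding N_def
        by (simp add: coprime_commute)
      ultimately have "int N dvd 3 * A * int z - 2 * B" unfolding L_def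
        using coprime_dvd_mult_right_iff by blast
      then show False using nd[OF cz] unfolding N_def by simp
    qed
    then show "g z * (\<Sum>y<N. expc (real y * (of_int (L z) / real N))) = 0"
      using geom_zero[OF q0(2)] by simp
  qed
  finally show ?thesis using q0(2) by simp
qed



lemma ndvd_z: assumes "prime p" "coprime z p" shows "\<not> int p dvd int z"
  using assms(1,2) coprime_absorb_right not_prime_unit by auto

lemma p3: assumes "(int p) dvd 3" "prime p" shows "p = 3"
    by (smt (verit, best) One_nat_def assms(1,2) dvd_add_triv_left_iff
    int_eq_iff_numeral int_ops(4) numeral_3_eq_3 numeral_nat_le_iff
    numerals(1) odd_Numeral1 of_nat_1 one_plus_numeral prime_ge_2_nat
    semiring_norm(2) zdvd_imp_le)

lemma p2: assumes "(int p) dvd 2 ^ f" "prime p" shows "p = 2"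
  by (smt (verit, ccfv_threshold) assms(1,2) fact_2 gr0I int_dvd_int_iff
    mask_0 mask_int_def not_prime_unit of_nat_fact prime_dvd_power_int_iff
    prime_nat_int_transfer primes_dvd_imp_eq two_is_prime)

lemma p3pow: assumes "(int p) dvd 3 ^ f" "prime p" shows "p = 3"
proof -
  have "prime (int p)" using assms(2) by simp
  then have "int p dvd 3" using assms(1) prime_dvd_power by blast
  then show ?thesis using p3 assms(2) by blast
qed

lemma core_ndvd:
  fixes p f2 f3 :: nat and c d :: int and z :: nat
  assumes p: "prime p" and f: "f2 \<le> 1" "f3 \<le> 1" "p = 2 \<Longrightarrow> f2 = 1" "p = 3 \<Longrightarrow> f3 = 1"
    and cd: "(\<not> int p dvd c \<and> int p dvd d) \<or> (int p dvd c \<and> \<not> int p dvd d)"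
    and z: "coprime z p"
  shows "\<exists>e. e \<le> (if p = 2 \<or> p = 3 then 2 else 1) \<and>
           \<not> int p ^ e dvd (3 * (2 ^ f2 * c) * int z - 2 * (3 ^ f3 * d))"
proof -
  have ip: "prime (int p)" using p by simp
  have nz: "\<not> int p dvd int z" using ndvd_z[OF p z] .
  consider "p = 2" | "p = 3" | "p \<noteq> 2" "p \<noteq> 3" by blast
  then show ?thesis
  proof cases
    case 1
    then have f21: "f2 = 1" using f by simp
    have oz: "odd (int z)" using nz 1 by simp
    have oc: "odd c \<longleftrightarrow> even d" using cd 1 by auto
    have o: "odd (3 * c * int z - 3 ^ f3 * d)" using oz oc by auto
    have eq: "3 * (2 ^ f2 * c) * int z - 2 * (3 ^ f3 * d) = 2 * (3 * c * int z - 3 ^ f3 * d)"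
      using f21 by (simp add: algebra_simps)
    have "\<not> 2 * 2 dvd 2 * (3 * c * int z - 3 ^ f3 * d)"
      using o by (subst dvd_mult_cancel_left) simp
    then have "\<not> 4 dvd (3 * (2 ^ f2 * c) * int z - 2 * (3 ^ f3 * d))"
      unfolding eq by simp
    then show ?thesis using 1 by (intro exI[of _ 2]) simp
  next
    case 2
    then have f31: "f3 = 1" using f by simp
    have ne: "\<not> 3 dvd (2 ^ f2 * c * int z - 2 * d)"
    proof
      assume h: "3 dvd (2 ^ f2 * c * int z - 2 * d)"
      have n2: "\<not> (3::int) dvd 2 ^ f2" using f(1) by (cases f2) auto
      have p3i: "prime (3::int)" by simp
      have nz3: "\<not> (3::int) dvd int z" using nz 2 by simp
      show False
      proof (cases "3 dvd c")
        case True
        then have a: "3 dvd 2 ^ f2 * c * int z" by simp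
        have "2 * d = 2 ^ f2 * c * int z - (2 ^ f2 * c * int z - 2 * d)" by simp
        then have "3 dvd 2 * d" using dvd_diff[OF a h] by simp
        then have "3 dvd d" using prime_dvd_mult_iff[OF p3i] by auto
        then show False using True cd 2 by simp
      next
        case False
        then have "3 dvd d" using cd 2 by auto
        then have a: "3 dvd 2 * d" by simp
        have "2 ^ f2 * c * int z = (2 ^ f2 * c * int z - 2 * d) + 2 * d" by simp
        then have "3 dvd 2 ^ f2 * c * int z" using dvd_add[OF h a] by simp
        then show False using False n2 nz3 prime_dvd_mult_iff[OF p3i] by auto
      qed
    qed
    have "\<not> 9 dvd (3 * (2 ^ f2 * c) * int z - 2 * (3 ^ f3 * d))"
    proof
      assume "9 dvd (3 * (2 ^ f2 * c) * int z - 2 * (3 ^ f3 * d))"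
      moreover have "3 * (2 ^ f2 * c) * int z - 2 * (3 ^ f3 * d) = 3 * (2 ^ f2 * c * int z - 2 * d)"
        using f31 by (simp add: algebra_simps)
      ultimately have "3 * 3 dvd 3 * (2 ^ f2 * c * int z - 2 * d)" by simp
      then show False using ne by (subst (asm) dvd_mult_cancel_left) simp
    qed
    then show ?thesis using 2 by (intro exI[of _ 2]) simp
  next
    case 3
    have n2: "\<not> int p dvd 2 ^ f2" using p2 p 3 by blast
    have n3: "\<not> int p dvd 3 ^ f3" using p3pow p 3 by blast
    have n3': "\<not> int p dvd 3" using p3 p 3 by blast
    have n2': "\<not> int p dvd 2" using p2[of p 1] p 3 by auto
    have "\<not> int p dvd (3 * (2 ^ f2 * c) * int z - 2 * (3 ^ f3 * d))"
    proof
      assume h: "int p dvd (3 * (2 ^ f2 * c) * int z - 2 * (3 ^ f3 * d))"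
      show False
      proof (cases "int p dvd c")
        case True
        then have a: "int p dvd 3 * (2 ^ f2 * c) * int z" by simp
        have "2 * (3 ^ f3 * d) = 3 * (2 ^ f2 * c) * int z - (3 * (2 ^ f2 * c) * int z - 2 * (3 ^ f3 * d))" by simp
        then have "int p dvd 2 * (3 ^ f3 * d)" using dvd_diff[OF a h] by simp
        then show False using True cd n2' n3 prime_dvd_mult_iff[OF ip] by auto
      next
        case False
        then have "int p dvd d" using cd by auto
        then have a: "int p dvd 2 * (3 ^ f3 * d)" by simp
        have "3 * (2 ^ f2 * c) * int z = (3 * (2 ^ f2 * c) * int z - 2 * (3 ^ f3 * d)) + 2 * (3 ^ f3 * d)" by simp
        then have "int p dvd 3 * (2 ^ f2 * c) * int z" using dvd_add[OF h a] by simp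
        then show False using False n2 n3' nz prime_dvd_mult_iff[OF ip] by auto
      qed
    qed
    then show ?thesis using 3 by (intro exI[of _ 1]) simp
  qed
qed



lemma core:
  fixes p T f2 f3 :: nat and c d :: int
  assumes p: "prime p" and T: "T \<ge> r p" and f: "f2 \<le> 1" "f3 \<le> 1" "p = 2 \<Longrightarrow> f2 = 1" "p = 3 \<Longrightarrow> f3 = 1"
    and cd: "(\<not> int p dvd c \<and> int p dvd d) \<or> (int p dvd c \<and> \<not> int p dvd d)"
  shows "E (2 ^ f2 * c) (3 ^ f3 * d) (p ^ T) = 0"
proof (rule E_vanish[OF p, of "T - T div 2"])
  have T2: "T \<ge> 2" using T by (simp add: r_def split: if_splits)
  then show "1 \<le> T - T div 2" by simp
  show "T \<le> 2 * (T - T div 2)" by simp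
  show "T - T div 2 \<le> T" by simp
  fix z :: nat assume z: "coprime z p"
  obtain e where e: "e \<le> (if p = 2 \<or> p = 3 then 2 else 1)"
     "\<not> int p ^ e dvd (3 * (2 ^ f2 * c) * int z - 2 * (3 ^ f3 * d))"
    using core_ndvd[OF p f cd z] by blast
  have "(if p = 2 \<or> p = 3 then 2 else 1) \<le> T div 2" using T T2 by (auto simp: r_def split: if_splits)
  then have "e \<le> T - (T - T div 2)" using e(1) by simp
  then show "\<not> int p ^ (T - (T - T div 2)) dvd 3 * (2 ^ f2 * c) * int z - 2 * (3 ^ f3 * d)"
    using e(2) power_le_dvd by blast
qed

lemma Eff_reduce:
  fixes p s t f2 f3 :: nat and c d :: int
  assumes "prime p" "s < t" "int p ^ s dvd c" "int p ^ s dvd d"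
  shows "Eff f2 f3 c d (p ^ t) = of_nat (p ^ s) * Eff f2 f3 (c div int p ^ s) (d div int p ^ s) (p ^ (t - s))"
proof -
  have "Eff f2 f3 c d (p ^ t) = of_nat (p ^ s) * E ((2 ^ f2 * c) div int p ^ s) ((3 ^ f3 * d) div int p ^ s) (p ^ (t - s))"
    unfolding Eff_def using assms by (intro E_reduce) auto
  also have "(2 ^ f2 * c) div int p ^ s = 2 ^ f2 * (c div int p ^ s)" using assms(3) by (simp add: div_mult_swap)
  also have "(3 ^ f3 * d) div int p ^ s = 3 ^ f3 * (d div int p ^ s)" using assms(4) by (simp add: div_mult_swap)
  finally show ?thesis unfolding Eff_def .
qed

lemma gcd_pow:
  fixes p t :: nat and c :: int
  assumes "prime p"
  shows "\<exists>a\<le>t. gcd c (int p ^ t) = int p ^ a"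
proof -
  have "nat (gcd c (int p ^ t)) dvd p ^ t"
    by (metis gcd_dvd2 gcd_ge_0_int nat_dvd_iff nat_int of_nat_power)
  then obtain a where "a \<le> t" "nat (gcd c (int p ^ t)) = p ^ a"
    using divides_primepow_nat[OF assms] by blast
  then show ?thesis by (metis gcd_ge_0_int int_nat_eq of_nat_power)
qed

lemma dvd_val:
  fixes p t a k :: nat and c :: int
  assumes "prime p" "gcd c (int p ^ t) = int p ^ a" "k \<le> t"
  shows "int p ^ k dvd c \<longleftrightarrow> k \<le> a"
proof -
  have p1: "int p > 1" using assms(1) prime_gt_1_nat by simp
  have "int p ^ k dvd c \<longleftrightarrow> int p ^ k dvd gcd c (int p ^ t)"
    using assms(3) by (simp add: le_imp_power_dvd)
  also have "\<dots> \<longleftrightarrow> k \<le> a" unfolding assms(2) using p1 by (simp add: dvd_power_iff)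
  finally show ?thesis .
qed

theorem lemma4p4:
  fixes p t f2 f3 :: nat and c d :: int
  assumes "prime p" and "t \<ge> r p"
    and "f2 \<in> {0,1}" and "f3 \<in> {0,1}"
    and "w2 (p ^ t) \<le> f2" and "w3 (p ^ t) \<le> f3"
  shows "(\<not> int p ^ (t - r p + 2) dvd c \<and> \<not> int p ^ (t - r p + 2) dvd d \<longrightarrow>
           Eff f2 f3 c d (p ^ t) \<noteq> 0 \<longrightarrow>
           (\<exists>s. gcd c (int p ^ t) = int p ^ s \<and> gcd d (int p ^ t) = int p ^ s \<and>
                Eff f2 f3 c d (p ^ t) =
                  of_nat (p ^ s) * Eff f2 f3 (c div int p ^ s) (d div int p ^ s) (p ^ (t - s))))
       \<and> (int p ^ (t - r p + 2) dvd c \<or> int p ^ (t - r p + 2) dvd d \<longrightarrow>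
           Eff f2 f3 c d (p ^ t) \<noteq> 0 \<longrightarrow>
           (int p ^ (t - r p + 1) dvd gcd c d \<and>
            Eff f2 f3 c d (p ^ t) =
              of_nat (p ^ (t - r p + 1)) *
              Eff f2 f3 (c div int p ^ (t - r p + 1)) (d div int p ^ (t - r p + 1)) (p ^ (r p - 1))))"
proof -
  note p = assms(1)
  have r2: "r p \<ge> 2" by (simp add: r_def)
  have f: "f2 \<le> 1" "f3 \<le> 1" using assms(3,4) by auto
  have f2: "f2 = 1" if "p = 2"
  proof -
    have "t \<ge> 6" using assms(2) that by (simp add: r_def)
    then have "(2::nat) ^ 2 dvd 2 ^ t" by (intro le_imp_power_dvd) simp
    then have "(4::nat) dvd 2 ^ t" by simp
    then show ?thesis using assms(5) f that by (simp add: w2_def)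
  qed
  have f3: "f3 = 1" if "p = 3"
  proof -
    have "t \<ge> 5" using assms(2) that by (simp add: r_def)
    then have "(3::nat) ^ 2 dvd 3 ^ t" by (intro le_imp_power_dvd) simp
    then have "(9::nat) dvd 3 ^ t" by simp
    then show ?thesis using assms(6) f that by (simp add: w3_def)
  qed
  obtain a where a: "a \<le> t" "gcd c (int p ^ t) = int p ^ a" using gcd_pow[OF p] by blast
  obtain b where b: "b \<le> t" "gcd d (int p ^ t) = int p ^ b" using gcd_pow[OF p] by blast
  have dc: "k \<le> t \<Longrightarrow> int p ^ k dvd c \<longleftrightarrow> k \<le> a" for k using dvd_val[OF p a(2)] by blast
  have dd: "k \<le> t \<Longrightarrow> int p ^ k dvd d \<longleftrightarrow> k \<le> b" for k using dvd_val[OF p b(2)] by blast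
  have p0: "int p > 0" using p prime_gt_0_nat by simp
  have van: "Eff f2 f3 c d (p ^ t) = 0" if ab: "a \<noteq> b" "min a b \<le> t - r p"
  proof -
    define m where "m = min a b"
    have mt: "m < t" using ab r2 assms(2) by (simp add: m_def)
    have mc: "int p ^ m dvd c" "int p ^ m dvd d" using dc dd a b by (auto simp: m_def)
    obtain c' where c': "c = int p ^ m * c'" using mc(1) by blast
    obtain d' where d': "d = int p ^ m * d'" using mc(2) by blast
    have cdiv: "c div int p ^ m = c'" "d div int p ^ m = d'" using c' d' p0 by simp_all
    have pc: "int p dvd c' \<longleftrightarrow> int p ^ (m + 1) dvd c"
      unfolding c' using p0 by (simp add: mult_dvd_mono dvd_mult_cancel_left)
    have pd: "int p dvd d' \<longleftrightarrow> int p ^ (m + 1) dvd d"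
      unfolding d' using p0 by (simp add: mult_dvd_mono dvd_mult_cancel_left)
    have "(\<not> int p dvd c' \<and> int p dvd d') \<or> (int p dvd c' \<and> \<not> int p dvd d')"
    proof (cases "a < b")
      case True
      then have "m = a" "a + 1 \<le> t" using b(1) by (auto simp: m_def)
      moreover have "\<not> int p ^ (a + 1) dvd c" using dc[of "a + 1"] \<open>a + 1 \<le> t\<close> by simp
      moreover have "int p ^ (a + 1) dvd d" using dd[of "a + 1"] \<open>a + 1 \<le> t\<close> True by simp
      ultimately show ?thesis using pc pd by (simp del: power_Suc)
    next
      case False
      then have "m = b" "b + 1 \<le> t" "b < a" using a(1) ab(1) by (auto simp: m_def)
      moreover have "\<not> int p ^ (b + 1) dvd d" using dd[of "b + 1"] \<open>b + 1 \<le> t\<close> by simp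
      moreover have "int p ^ (b + 1) dvd c" using dc[of "b + 1"] \<open>b + 1 \<le> t\<close> \<open>b < a\<close> by simp
      ultimately show ?thesis using pc pd by (simp del: power_Suc)
    qed
    then have "E (2 ^ f2 * c') (3 ^ f3 * d') (p ^ (t - m)) = 0"
      using core[OF p _ f f2 f3] ab assms(2) by (simp add: m_def)
    then show ?thesis using Eff_reduce[OF p mt mc] cdiv by (simp add: Eff_def)
  qed
  show ?thesis
  proof (intro conjI impI)
    assume h: "\<not> int p ^ (t - r p + 2) dvd c \<and> \<not> int p ^ (t - r p + 2) dvd d"
      and ne: "Eff f2 f3 c d (p ^ t) \<noteq> 0"
    have le: "t - r p + 2 \<le> t" using r2 assms(2) by simp
    have "a \<le> t - r p + 1" "b \<le> t - r p + 1" using h dc[OF le] dd[OF le] by auto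
    then have ab: "a = b" using van ne by force
    have st: "a < t" using \<open>a \<le> t - r p + 1\<close> r2 assms(2) by simp
    have "int p ^ a dvd c" "int p ^ a dvd d" using dc dd a(1) ab by auto
    then show "\<exists>s. gcd c (int p ^ t) = int p ^ s \<and> gcd d (int p ^ t) = int p ^ s \<and>
                Eff f2 f3 c d (p ^ t) =
                  of_nat (p ^ s) * Eff f2 f3 (c div int p ^ s) (d div int p ^ s) (p ^ (t - s))"
      using a b ab Eff_reduce[OF p st] by blast
  next
    assume h: "int p ^ (t - r p + 2) dvd c \<or> int p ^ (t - r p + 2) dvd d"
      and ne: "Eff f2 f3 c d (p ^ t) \<noteq> 0"
    have le: "t - r p + 2 \<le> t" using r2 assms(2) by simp
    have "t - r p + 2 \<le> a \<or> t - r p + 2 \<le> b" using h dc[OF le] dd[OF le] by auto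
    then have m: "t - r p + 1 \<le> a" "t - r p + 1 \<le> b" using van ne by force+
    have le1: "t - r p + 1 \<le> t" using r2 assms(2) by simp
    have dv: "int p ^ (t - r p + 1) dvd c" "int p ^ (t - r p + 1) dvd d" using dc[OF le1] dd[OF le1] m by auto
    then show "int p ^ (t - r p + 1) dvd gcd c d" by simp
    have st: "t - r p + 1 < t" using r2 assms(2) by simp
    have tt: "t - (t - r p + 1) = r p - 1" using r2 assms(2) by simp
    show "Eff f2 f3 c d (p ^ t) = of_nat (p ^ (t - r p + 1)) *
              Eff f2 f3 (c div int p ^ (t - r p + 1)) (d div int p ^ (t - r p + 1)) (p ^ (r p - 1))"
      using Eff_reduce[OF p st dv] unfolding tt .
  qed
qed

end
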